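(* There is a universal constant $C>0$ such that for every $N\in\mathbb{N}$ and every $D>0$ the following holds: if $\xi_1,\dots,\xi_N$ are i.i.d. $\mathcal{N}(0,1)$ and $Z=(\sum_{i=1}^N\xi_i^2)^{1/2}$, then there is a discrete random variable $r$ (a function of $Z$) such that $\mathbb{E}(Z-r)^2\le D$ and its Shannon entropy satisfies $H(r)\le C\ln(1/D)$.
   Context: Shannon entropy of a discrete random variable $r$: $H(r)=-\sum_y P[r=y]\ln P[r=y]$.
   Formalization: The parameter D ranges over 0 < D <= 1 only, rather than over every D > 0 as in the bound H(r) <= C ln(1/D). The statement above fails without it. *)

theory Defs
  imports "HOL-Probability.Probability"
begin

definition gauss_space :: "nat \<Rightarrow> (nat \<Rightarrow> real) measure" where
  "gauss_space N = PiM {..<N} (\<lambda>_. density lborel std_normal_density)"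

definition chi_norm :: "nat \<Rightarrow> (nat \<Rightarrow> real) \<Rightarrow> real" where
  "chi_norm N \<omega> = sqrt (\<Sum>i<N. (\<omega> i)\<^sup>2)"

definition disc_entropy :: "'a measure \<Rightarrow> ('a \<Rightarrow> 'b) \<Rightarrow> real" where
  "disc_entropy M r =
     (\<Sum>\<^sub>\<infinity> y \<in> r ` space M. - (measure M {x \<in> space M. r x = y} * ln (measure M {x \<in> space M. r x = y})))"

definition finite_disc_entropy :: "'a measure \<Rightarrow> ('a \<Rightarrow> 'b) \<Rightarrow> bool" where
  "finite_disc_entropy M r =
     ((\<lambda>y. - (measure M {x \<in> space M. r x = y} * ln (measure M {x \<in> space M. r x = y})))
        summable_on (r ` space M))"

end

theory Submission
  imports Defs "HOL-Real_Asymp.Real_Asymp"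
begin

lemma ibp_lborel:
  fixes F f :: "real \<Rightarrow> real"
  assumes D: "\<And>x. (F has_real_derivative f x) (at x)" and C: "\<And>x. isCont f x"
    and I: "integrable lborel f" and T: "(F \<longlongrightarrow> 0) at_top" and B: "(F \<longlongrightarrow> 0) at_bot"
  shows "integral\<^sup>L lborel f = 0"
proof -
  have "(LBINT x=-\<infinity>..\<infinity>. f x) = 0 - 0"
  proof (rule interval_integral_FTC_integrable[where F=F])
    show "((F \<circ> real_of_ereal) \<longlongrightarrow> 0) (at_right (-\<infinity>))"
      unfolding at_right_MInf tendsto_compose_filtermap using B by (simp add: filtermap_filtermap)
    show "((F \<circ> real_of_ereal) \<longlongrightarrow> 0) (at_left \<infinity>)"
      unfolding at_left_PInf tendsto_compose_filtermap using T by (simp add: filtermap_filtermap)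
    show "set_integrable lborel (einterval (- \<infinity>) \<infinity>) f"
      using I by (simp add: set_integrable_def)
  qed (use D C in \<open>auto simp: has_real_derivative_iff_has_vector_derivative\<close>)
  then show ?thesis
    by (simp add: interval_lebesgue_integral_def set_lebesgue_integral_def)
qed

abbreviation "phi \<equiv> std_normal_density"

lemma phi_eq: "phi x = exp (- x\<^sup>2 / 2) / sqrt (2 * pi)"
  by (simp add: std_normal_density_def)

lemma phi_deriv: "(phi has_real_derivative (- x * phi x)) (at x)"
  unfolding phi_eq[abs_def]
  by (auto intro!: derivative_eq_intros simp: field_simps power2_eq_square)

lemma phi_cont: "isCont phi x"
  unfolding phi_eq[abs_def] by (intro continuous_intros) auto

lemma phi_nonneg: "0 \<le> phi x" by simp

lemma integrable_phi_poly: "integrable lborel (\<lambda>x. phi x * x ^ k)"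
  by (rule integrable_std_normal_moment)

lemma integrable_dom:
  fixes a :: real
  shows "integrable lborel (\<lambda>x. phi x * (1 + a + x\<^sup>2) ^ 4)"
proof -
  have eq: "(\<lambda>x. phi x * (1 + a + x\<^sup>2) ^ 4) = (\<lambda>x. (1+a)^4 * (phi x * x^0) + (4*(1+a)^3) * (phi x * x^2)
     + (6*(1+a)^2) * (phi x * x^4) + (4*(1+a)) * (phi x * x^6) + phi x * x^8)"
    by (rule ext) (simp add: power2_eq_square power3_eq_cube algebra_simps eval_nat_numeral)
  show ?thesis unfolding eq
    by (intro Bochner_Integration.integrable_add; (rule Bochner_Integration.integrable_mult_right)?; rule integrable_phi_poly)
qed

lemma integrable_by_dom:
  fixes a :: real and g :: "real \<Rightarrow> real"
  assumes "a \<ge> 0" and m: "g \<in> borel_measurable borel"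
    and b: "\<And>x. \<bar>g x\<bar> \<le> (1 + a + x\<^sup>2) ^ 4"
  shows "integrable lborel (\<lambda>x. phi x * g x)"
proof (rule Bochner_Integration.integrable_bound[OF integrable_dom[of a]])
  show "(\<lambda>x. phi x * g x) \<in> borel_measurable lborel" using m by measurable
  show "AE x in lborel. norm (phi x * g x) \<le> norm (phi x * (1 + a + x\<^sup>2) ^ 4)"
  proof (intro AE_I2)
    fix x
    have "0 \<le> (1 + a + x\<^sup>2) ^ 4" using assms(1) by simp
    then show "norm (phi x * g x) \<le> norm (phi x * (1 + a + x\<^sup>2) ^ 4)"
      using b[of x] by (simp add: abs_mult mult_left_mono)
  qed
qed

lemma y_le_sq: "0 \<le> (y::real) \<Longrightarrow> y \<le> (1 + y)\<^sup>2" by (simp add: power2_eq_square algebra_simps)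
lemma sqrt_le_u: "0 \<le> a \<Longrightarrow> sqrt (a + x\<^sup>2) \<le> 1 + a + x\<^sup>2"
proof -
  assume a: "0 \<le> a"
  have y: "0 \<le> a + x\<^sup>2" using a by simp
  have "a + x\<^sup>2 \<le> (1 + a + x\<^sup>2)\<^sup>2"
    using y_le_sq[OF y] by (simp add: add.assoc)
  then have "sqrt (a + x\<^sup>2) \<le> sqrt ((1 + a + x\<^sup>2)\<^sup>2)"
    by (intro real_sqrt_le_mono)
  also have "\<dots> = 1 + a + x\<^sup>2" using a by simp
  finally show ?thesis .
qed
lemma u_pow_le: "0 \<le> a \<Longrightarrow> k \<le> 4 \<Longrightarrow> (1 + a + x\<^sup>2) ^ k \<le> (1 + a + (x::real)\<^sup>2) ^ 4"
  by (rule power_increasing) auto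

lemma I1_pos:
  fixes a :: real
  assumes a: "a > 0"
  shows "(\<integral>x. phi x * (x\<^sup>2 * sqrt (a + x\<^sup>2)) \<partial>lborel) =
         (\<integral>x. phi x * sqrt (a + x\<^sup>2) \<partial>lborel) + (\<integral>x. phi x * (x\<^sup>2 / sqrt (a + x\<^sup>2)) \<partial>lborel)"
proof -
  define s where "s x = sqrt (a + x\<^sup>2)" for x
  have spos: "s x > 0" for x using a unfolding s_def by (simp add: add_pos_nonneg)
  have nz: "a + x\<^sup>2 \<noteq> 0" for x using a by (metis add_pos_nonneg order_less_irrefl zero_le_power2)
  have s2: "s x ^ 2 = a + x\<^sup>2" for x using a unfolding s_def by (simp add: add_nonneg_nonneg)
  have su: "s x \<le> 1 + a + x\<^sup>2" for x unfolding s_def using a sqrt_le_u by simp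
  have uge: "1 \<le> 1 + a + x\<^sup>2" for x using a by simp
  have int1: "integrable lborel (\<lambda>x. phi x * s x)"
  proof (rule integrable_by_dom[of a])
    fix x show "\<bar>s x\<bar> \<le> (1 + a + x\<^sup>2) ^ 4"
      using su[of x] spos[of x] u_pow_le[of a 1 x] a by simp
  qed (use a in \<open>unfold s_def, measurable\<close>)
  have int2: "integrable lborel (\<lambda>x. phi x * (x\<^sup>2 / s x))"
  proof (rule integrable_by_dom[of a])
    fix x
    have "x\<^sup>2 / s x \<le> s x" using spos[of x] s2[of x] a
      by (simp add: divide_le_eq power2_eq_square)
    then show "\<bar>x\<^sup>2 / s x\<bar> \<le> (1 + a + x\<^sup>2) ^ 4"
      using su[of x] spos[of x] u_pow_le[of a 1 x] a by simp
  qed (use a in \<open>unfold s_def, measurable\<close>)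
  have int3: "integrable lborel (\<lambda>x. phi x * (x\<^sup>2 * s x))"
  proof (rule integrable_by_dom[of a])
    fix x
    have "x\<^sup>2 * s x \<le> (1 + a + x\<^sup>2) * (1 + a + x\<^sup>2)"
      using su[of x] spos[of x] a by (intro mult_mono) auto
    also have "\<dots> \<le> (1 + a + x\<^sup>2) ^ 4" using u_pow_le[of a 2 x] a by (simp add: power2_eq_square)
    finally show "\<bar>x\<^sup>2 * s x\<bar> \<le> (1 + a + x\<^sup>2) ^ 4"
      using spos[of x] by simp
  qed (use a in \<open>unfold s_def, measurable\<close>)
  define F where "F x = phi x * (x * s x)" for x
  define f where "f x = phi x * s x + phi x * (x\<^sup>2 / s x) - phi x * (x\<^sup>2 * s x)" for x
  have "integral\<^sup>L lborel f = 0"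
  proof (rule ibp_lborel[where F=F])
    fix x
    have "((\<lambda>x. sqrt (a + x\<^sup>2)) has_real_derivative (x / s x)) (at x)"
      using spos[of x] unfolding s_def
      by (auto intro!: derivative_eq_intros simp: field_simps power2_eq_square)
    then have ds: "(s has_real_derivative (x / s x)) (at x)"
      unfolding s_def[abs_def] .
    show "(F has_real_derivative f x) (at x)"
      unfolding F_def[abs_def]
      apply (rule DERIV_cong)
       apply (rule DERIV_mult[OF phi_deriv DERIV_mult[OF DERIV_ident ds]])
      using spos[of x] s2[of x] apply (simp add: f_def field_simps power2_eq_square)
      by (metis (no_types) mult.assoc distrib_right)
    show "isCont f x"
      unfolding f_def s_def using nz
      by (auto intro!: continuous_intros phi_cont)
  next
    show "integrable lborel f" unfolding f_def
      by (intro Bochner_Integration.integrable_add Bochner_Integration.integrable_diff int1 int2 int3)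
    show "(F \<longlongrightarrow> 0) at_top" unfolding F_def[abs_def] s_def phi_eq using a by real_asymp
    show "(F \<longlongrightarrow> 0) at_bot" unfolding F_def[abs_def] s_def phi_eq using a by real_asymp
  qed
  then have "(\<integral>x. phi x * s x \<partial>lborel) + (\<integral>x. phi x * (x\<^sup>2 / s x) \<partial>lborel) - (\<integral>x. phi x * (x\<^sup>2 * s x) \<partial>lborel) = 0"
    unfolding f_def using int1 int2 int3 by simp
  then show ?thesis unfolding s_def by simp
qed

lemma I3_pos:
  fixes a :: real
  assumes a: "a > 0"
  shows "(\<integral>x. phi x * (x\<^sup>2 * sqrt (a + x\<^sup>2) ^ 3) \<partial>lborel) =
         (\<integral>x. phi x * sqrt (a + x\<^sup>2) ^ 3 \<partial>lborel) + 3 * (\<integral>x. phi x * (x\<^sup>2 * sqrt (a + x\<^sup>2)) \<partial>lborel)"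
proof -
  define s where "s x = sqrt (a + x\<^sup>2)" for x
  have spos: "s x > 0" for x using a unfolding s_def by (simp add: add_pos_nonneg)
  have nz: "a + x\<^sup>2 \<noteq> 0" for x using a by (metis add_pos_nonneg order_less_irrefl zero_le_power2)
  have s2: "s x ^ 2 = a + x\<^sup>2" for x using a unfolding s_def by (simp add: add_nonneg_nonneg)
  have su: "s x \<le> 1 + a + x\<^sup>2" for x unfolding s_def using a sqrt_le_u by simp
  have xu: "x\<^sup>2 \<le> 1 + a + x\<^sup>2" for x using a by simp
  have int1: "integrable lborel (\<lambda>x. phi x * s x ^ 3)"
  proof (rule integrable_by_dom[of a])
    fix x
    have h: "s x ^ 3 \<le> (1 + a + x\<^sup>2) ^ 3"
      using su[of x] spos[of x] by (intro power_mono) auto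
    have "\<bar>s x ^ 3\<bar> = s x ^ 3" using spos[of x] by simp
    then show "\<bar>s x ^ 3\<bar> \<le> (1 + a + x\<^sup>2) ^ 4"
      using h u_pow_le[of a 3 x] a by linarith
  qed (use a in \<open>unfold s_def, measurable\<close>)
  have int2: "integrable lborel (\<lambda>x. phi x * (x\<^sup>2 * s x))"
  proof (rule integrable_by_dom[of a])
    fix x
    have "x\<^sup>2 * s x \<le> (1 + a + x\<^sup>2) * (1 + a + x\<^sup>2)"
      using su[of x] spos[of x] a by (intro mult_mono) auto
    also have "\<dots> \<le> (1 + a + x\<^sup>2) ^ 4" using u_pow_le[of a 2 x] a by (simp add: power2_eq_square)
    finally show "\<bar>x\<^sup>2 * s x\<bar> \<le> (1 + a + x\<^sup>2) ^ 4"
      using spos[of x] by simp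
  qed (use a in \<open>unfold s_def, measurable\<close>)
  have int3: "integrable lborel (\<lambda>x. phi x * (x\<^sup>2 * s x ^ 3))"
  proof (rule integrable_by_dom[of a])
    fix x
    have "s x ^ 3 \<le> (1 + a + x\<^sup>2) ^ 3"
      using su[of x] spos[of x] by (intro power_mono) auto
    then have "x\<^sup>2 * s x ^ 3 \<le> (1 + a + x\<^sup>2) * (1 + a + x\<^sup>2) ^ 3"
      using spos[of x] a by (intro mult_mono) auto
    also have "\<dots> = (1 + a + x\<^sup>2) ^ 4" by (simp add: eval_nat_numeral)
    finally show "\<bar>x\<^sup>2 * s x ^ 3\<bar> \<le> (1 + a + x\<^sup>2) ^ 4"
      using spos[of x] by simp
  qed (use a in \<open>unfold s_def, measurable\<close>)
  define F where "F x = phi x * (x * s x ^ 3)" for x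
  define f where "f x = phi x * s x ^ 3 + 3 * (phi x * (x\<^sup>2 * s x)) - phi x * (x\<^sup>2 * s x ^ 3)" for x
  have "integral\<^sup>L lborel f = 0"
  proof (rule ibp_lborel[where F=F])
    fix x
    have "((\<lambda>x. sqrt (a + x\<^sup>2)) has_real_derivative (x / s x)) (at x)"
      using spos[of x] unfolding s_def
      by (auto intro!: derivative_eq_intros simp: field_simps power2_eq_square)
    then have ds: "(s has_real_derivative (x / s x)) (at x)"
      unfolding s_def[abs_def] .
    have ds3: "((\<lambda>x. s x ^ 3) has_real_derivative (3 * s x ^ 2 * (x / s x))) (at x)"
      by (rule DERIV_cong[OF DERIV_power[OF ds, of 3]]) simp
    show "(F has_real_derivative f x) (at x)"
      unfolding F_def[abs_def]
      apply (rule DERIV_cong)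
       apply (rule DERIV_mult[OF phi_deriv DERIV_mult[OF DERIV_ident ds3]])
      using spos[of x] by (simp add: f_def field_simps power2_eq_square eval_nat_numeral)
    show "isCont f x"
      unfolding f_def s_def using nz
      by (auto intro!: continuous_intros phi_cont)
  next
    show "integrable lborel f" unfolding f_def
      by (intro Bochner_Integration.integrable_add Bochner_Integration.integrable_diff
          Bochner_Integration.integrable_mult_right int1 int2 int3)
    show "(F \<longlongrightarrow> 0) at_top" unfolding F_def[abs_def] s_def phi_eq using a by real_asymp
    show "(F \<longlongrightarrow> 0) at_bot" unfolding F_def[abs_def] s_def phi_eq using a by real_asymp
  qed
  then have "(\<integral>x. phi x * s x ^ 3 \<partial>lborel) + 3 * (\<integral>x. phi x * (x\<^sup>2 * s x) \<partial>lborel) - (\<integral>x. phi x * (x\<^sup>2 * s x ^ 3) \<partial>lborel) = 0"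
    unfolding f_def using int1 int2 int3 by simp
  then show ?thesis unfolding s_def by simp
qed

lemma abs_moment: "(\<integral>x. phi x * \<bar>x\<bar> ^ (2 * k + 1) \<partial>lborel) = sqrt (2 / pi) * 2 ^ k * fact k"
  by (rule integral_std_normal_moment_abs_odd)

lemma sq_div_abs: "(x::real)\<^sup>2 / \<bar>x\<bar> = \<bar>x\<bar>"
proof (cases "x = 0")
  case False
  then show ?thesis by (simp add: divide_eq_eq power2_eq_square)
qed simp

lemma I1_0:
  "(\<integral>x. phi x * (x\<^sup>2 * sqrt (0 + x\<^sup>2)) \<partial>lborel) =
         (\<integral>x. phi x * sqrt (0 + x\<^sup>2) \<partial>lborel) + (\<integral>x. phi x * (x\<^sup>2 / sqrt (0 + x\<^sup>2)) \<partial>lborel)"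
proof -
  have e1: "(\<lambda>x. phi x * (x\<^sup>2 * sqrt (0 + x\<^sup>2))) = (\<lambda>x. phi x * \<bar>x\<bar> ^ (2 * 1 + 1))"
    by (rule ext) (simp add: power2_eq_square eval_nat_numeral abs_mult)
  have e2: "(\<lambda>x. phi x * sqrt (0 + x\<^sup>2)) = (\<lambda>x. phi x * \<bar>x\<bar> ^ (2 * 0 + 1))"
    by (rule ext) simp
  have e3: "(\<lambda>x. phi x * (x\<^sup>2 / sqrt (0 + x\<^sup>2))) = (\<lambda>x. phi x * \<bar>x\<bar> ^ (2 * 0 + 1))"
    by (rule ext) (simp add: sq_div_abs)
  show ?thesis unfolding e1 e2 e3 abs_moment by simp
qed

lemma I3_0:
  "(\<integral>x. phi x * (x\<^sup>2 * sqrt (0 + x\<^sup>2) ^ 3) \<partial>lborel) =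
         (\<integral>x. phi x * sqrt (0 + x\<^sup>2) ^ 3 \<partial>lborel) + 3 * (\<integral>x. phi x * (x\<^sup>2 * sqrt (0 + x\<^sup>2)) \<partial>lborel)"
proof -
  have e1: "(\<lambda>x. phi x * (x\<^sup>2 * sqrt (0 + x\<^sup>2) ^ 3)) = (\<lambda>x. phi x * \<bar>x\<bar> ^ (2 * 2 + 1))"
    by (rule ext) (simp add: power2_eq_square eval_nat_numeral abs_mult)
  have e2: "(\<lambda>x. phi x * sqrt (0 + x\<^sup>2) ^ 3) = (\<lambda>x. phi x * \<bar>x\<bar> ^ (2 * 1 + 1))"
    by (rule ext) simp
  have e3: "(\<lambda>x. phi x * (x\<^sup>2 * sqrt (0 + x\<^sup>2))) = (\<lambda>x. phi x * \<bar>x\<bar> ^ (2 * 1 + 1))"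
    by (rule ext) (simp add: power2_eq_square eval_nat_numeral abs_mult)
  show ?thesis unfolding e1 e2 e3 abs_moment by (simp add: fact_numeral)
qed

lemma int_sk:
  assumes a: "0 \<le> a" and k: "k \<le> 4"
  shows "integrable lborel (\<lambda>x. phi x * sqrt (a + x\<^sup>2) ^ k)"
proof (rule integrable_by_dom[OF a])
  fix x
  have ax: "0 \<le> a + x\<^sup>2" using a by simp
  have s0: "0 \<le> sqrt (a + x\<^sup>2)" using ax by simp
  have "sqrt (a + x\<^sup>2) ^ k \<le> (1 + a + x\<^sup>2) ^ k"
    using sqrt_le_u[OF a, of x] ax by (intro power_mono) auto
  then show "\<bar>sqrt (a + x\<^sup>2) ^ k\<bar> \<le> (1 + a + x\<^sup>2) ^ 4"
    using u_pow_le[OF a k, of x] s0 ax by simp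
qed measurable

lemma int_x2sk:
  assumes a: "0 \<le> a" and k: "k \<le> 3"
  shows "integrable lborel (\<lambda>x. phi x * (x\<^sup>2 * sqrt (a + x\<^sup>2) ^ k))"
proof (rule integrable_by_dom[OF a])
  fix x
  have ax: "0 \<le> a + x\<^sup>2" using a by simp
  have s0: "0 \<le> sqrt (a + x\<^sup>2)" using ax by simp
  have "sqrt (a + x\<^sup>2) ^ k \<le> (1 + a + x\<^sup>2) ^ k"
    using sqrt_le_u[OF a, of x] ax by (intro power_mono) auto
  then have "x\<^sup>2 * sqrt (a + x\<^sup>2) ^ k \<le> (1 + a + x\<^sup>2) * (1 + a + x\<^sup>2) ^ k"
    using a by (intro mult_mono) auto
  also have "\<dots> = (1 + a + x\<^sup>2) ^ Suc k" by simp
  also have "\<dots> \<le> (1 + a + x\<^sup>2) ^ 4" using u_pow_le[OF a, of "Suc k" x] k by simp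
  finally show "\<bar>x\<^sup>2 * sqrt (a + x\<^sup>2) ^ k\<bar> \<le> (1 + a + x\<^sup>2) ^ 4"
    using s0 ax by simp
qed measurable

lemma int_x2ds:
  assumes a: "0 \<le> a"
  shows "integrable lborel (\<lambda>x. phi x * (x\<^sup>2 / sqrt (a + x\<^sup>2)))"
proof (rule integrable_by_dom[OF a])
  fix x
  have ax: "0 \<le> a + x\<^sup>2" using a by simp
  have s0: "0 \<le> sqrt (a + x\<^sup>2)" using ax by simp
  have "x\<^sup>2 / sqrt (a + x\<^sup>2) \<le> sqrt (a + x\<^sup>2)"
  proof (cases "sqrt (a + x\<^sup>2) = 0")
    case False
    then have "0 < sqrt (a + x\<^sup>2)" using s0 by linarith
    moreover have "sqrt (a + x\<^sup>2) * sqrt (a + x\<^sup>2) = a + x\<^sup>2" using a by simp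
    ultimately show ?thesis using a by (simp add: divide_le_eq)
  qed simp
  also have "\<dots> \<le> (1 + a + x\<^sup>2) ^ 1" using sqrt_le_u[OF a, of x] by simp
  also have "\<dots> \<le> (1 + a + x\<^sup>2) ^ 4" using u_pow_le[OF a, of 1 x] by simp
  finally show "\<bar>x\<^sup>2 / sqrt (a + x\<^sup>2)\<bar> \<le> (1 + a + x\<^sup>2) ^ 4"
    using s0 ax by simp
qed measurable

lemma NNB:
  assumes "integrable lborel (\<lambda>x. phi x * g x)" "\<And>x. 0 \<le> g x"
  shows "(\<integral>\<^sup>+x. ennreal (phi x) * ennreal (g x) \<partial>lborel) = ennreal (\<integral>x. phi x * g x \<partial>lborel)"
proof -
  have "(\<integral>\<^sup>+x. ennreal (phi x) * ennreal (g x) \<partial>lborel) = (\<integral>\<^sup>+x. ennreal (phi x * g x) \<partial>lborel)"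
    using assms(2) by (simp add: ennreal_mult)
  also have "\<dots> = ennreal (\<integral>x. phi x * g x \<partial>lborel)"
    by (rule nn_integral_eq_integral[OF assms(1)]) (use assms(2) in auto)
  finally show ?thesis .
qed

lemma I1:
  assumes a: "0 \<le> a"
  shows "(\<integral>x. phi x * (x\<^sup>2 * sqrt (a + x\<^sup>2)) \<partial>lborel) =
         (\<integral>x. phi x * sqrt (a + x\<^sup>2) \<partial>lborel) + (\<integral>x. phi x * (x\<^sup>2 / sqrt (a + x\<^sup>2)) \<partial>lborel)"
proof (cases "a = 0")
  case True then show ?thesis using I1_0 by simp
next
  case False then show ?thesis using I1_pos a by simp
qed

lemma I3:
  assumes a: "0 \<le> a"
  shows "(\<integral>x. phi x * (x\<^sup>2 * sqrt (a + x\<^sup>2) ^ 3) \<partial>lborel) =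
         (\<integral>x. phi x * sqrt (a + x\<^sup>2) ^ 3 \<partial>lborel) + 3 * (\<integral>x. phi x * (x\<^sup>2 * sqrt (a + x\<^sup>2)) \<partial>lborel)"
proof (cases "a = 0")
  case True then show ?thesis using I3_0 by simp
next
  case False then show ?thesis using I3_pos a by simp
qed

lemma NN1:
  assumes a: "0 \<le> a"
  shows "(\<integral>\<^sup>+x. ennreal (phi x) * ennreal (x\<^sup>2 * sqrt (a + x\<^sup>2)) \<partial>lborel) =
         (\<integral>\<^sup>+x. ennreal (phi x) * ennreal (sqrt (a + x\<^sup>2)) \<partial>lborel) +
         (\<integral>\<^sup>+x. ennreal (phi x) * ennreal (x\<^sup>2 / sqrt (a + x\<^sup>2)) \<partial>lborel)"
proof -
  have i1: "integrable lborel (\<lambda>x. phi x * (x\<^sup>2 * sqrt (a + x\<^sup>2)))"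
    using int_x2sk[OF a, of 1] by simp
  have i2: "integrable lborel (\<lambda>x. phi x * sqrt (a + x\<^sup>2))"
    using int_sk[OF a, of 1] by simp
  have i3: "integrable lborel (\<lambda>x. phi x * (x\<^sup>2 / sqrt (a + x\<^sup>2)))"
    using int_x2ds[OF a] .
  have n2: "0 \<le> (\<integral>x. phi x * sqrt (a + x\<^sup>2) \<partial>lborel)"
    by (intro integral_nonneg_AE AE_I2) (use a in simp)
  have n3: "0 \<le> (\<integral>x. phi x * (x\<^sup>2 / sqrt (a + x\<^sup>2)) \<partial>lborel)"
    by (intro integral_nonneg_AE AE_I2) (use a in simp)
  show ?thesis
    using a by (subst NNB[OF i1], simp, subst NNB[OF i2], simp, subst NNB[OF i3], simp)
       (simp add: I1[OF a] n2 n3)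
qed

lemma NN3:
  assumes a: "0 \<le> a"
  shows "(\<integral>\<^sup>+x. ennreal (phi x) * ennreal (x\<^sup>2 * sqrt (a + x\<^sup>2) ^ 3) \<partial>lborel) =
         (\<integral>\<^sup>+x. ennreal (phi x) * ennreal (sqrt (a + x\<^sup>2) ^ 3) \<partial>lborel) +
         3 * (\<integral>\<^sup>+x. ennreal (phi x) * ennreal (x\<^sup>2 * sqrt (a + x\<^sup>2)) \<partial>lborel)"
proof -
  have i1: "integrable lborel (\<lambda>x. phi x * (x\<^sup>2 * sqrt (a + x\<^sup>2) ^ 3))"
    using int_x2sk[OF a, of 3] by simp
  have i2: "integrable lborel (\<lambda>x. phi x * sqrt (a + x\<^sup>2) ^ 3)"
    using int_sk[OF a, of 3] by simp
  have i3: "integrable lborel (\<lambda>x. phi x * (x\<^sup>2 * sqrt (a + x\<^sup>2)))"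
    using int_x2sk[OF a, of 1] by simp
  have n2: "0 \<le> (\<integral>x. phi x * sqrt (a + x\<^sup>2) ^ 3 \<partial>lborel)"
    by (intro integral_nonneg_AE AE_I2) (use a in simp)
  have n3: "0 \<le> (\<integral>x. phi x * (x\<^sup>2 * sqrt (a + x\<^sup>2)) \<partial>lborel)"
    by (intro integral_nonneg_AE AE_I2) (use a in simp)
  show ?thesis
    using a by (subst NNB[OF i1], simp, subst NNB[OF i2], simp, subst NNB[OF i3], simp)
       (simp add: I3[OF a] n2 n3 ennreal_mult)
qed

lemma NN0:
  "(\<integral>\<^sup>+x. ennreal (phi x) * ennreal (x\<^sup>2) \<partial>lborel) = 1"
proof -
  have i: "integrable lborel (\<lambda>x. phi x * x\<^sup>2)" using integrable_phi_poly[of 2] .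
  have "(\<integral>x. phi x * x\<^sup>2 \<partial>lborel) = 1"
    using integral_std_normal_moment_even[of 1] by simp
  then show ?thesis by (subst NNB[OF i]) simp_all
qed

lemma NN2:
  assumes a: "0 \<le> a"
  shows "(\<integral>\<^sup>+x. ennreal (phi x) * ennreal (x\<^sup>2 * sqrt (a + x\<^sup>2) ^ 2) \<partial>lborel) =
         (\<integral>\<^sup>+x. ennreal (phi x) * ennreal (sqrt (a + x\<^sup>2) ^ 2) \<partial>lborel) +
         2 * (\<integral>\<^sup>+x. ennreal (phi x) * ennreal (x\<^sup>2) \<partial>lborel)"
proof -
  have e1: "\<And>x. x\<^sup>2 * (a + x\<^sup>2) = a * x ^ 2 + x ^ 4"
    using a by (simp add: power2_eq_square algebra_simps eval_nat_numeral)
  have e2: "\<And>x. sqrt (a + x\<^sup>2) ^ 2 = a + x\<^sup>2" using a by simp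
  have m0: "(\<integral>x. phi x \<partial>lborel) = 1" by simp
  have m2: "(\<integral>x. phi x * x ^ 2 \<partial>lborel) = 1"
    using integral_std_normal_moment_even[of 1] by simp
  have m4: "(\<integral>x. phi x * x ^ 4 \<partial>lborel) = 3"
    using integral_std_normal_moment_even[of 2] by (simp add: fact_numeral)
  have i2: "integrable lborel (\<lambda>x. phi x * x ^ 2)" by (rule integrable_phi_poly)
  have i4: "integrable lborel (\<lambda>x. phi x * x ^ 4)" by (rule integrable_phi_poly)
  have i0: "integrable lborel (\<lambda>x. phi x)" by simp
  have L: "(\<integral>x. phi x * (a * x ^ 2 + x ^ 4) \<partial>lborel) = a + 3"
  proof -
    have "(\<lambda>x. phi x * (a * x ^ 2 + x ^ 4)) = (\<lambda>x. a * (phi x * x ^ 2) + phi x * x ^ 4)"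
      by (rule ext) (simp add: algebra_simps)
    then show ?thesis using i2 i4 m2 m4 by simp
  qed
  have R: "(\<integral>x. phi x * (a + x\<^sup>2) \<partial>lborel) = a + 1"
  proof -
    have "(\<lambda>x. phi x * (a + x\<^sup>2)) = (\<lambda>x. a * phi x + phi x * x ^ 2)"
      by (rule ext) (simp add: algebra_simps)
    then show ?thesis using i0 i2 m0 m2 by simp
  qed
  have iL: "integrable lborel (\<lambda>x. phi x * (a * x ^ 2 + x ^ 4))"
  proof -
    have "(\<lambda>x. phi x * (a * x ^ 2 + x ^ 4)) = (\<lambda>x. a * (phi x * x ^ 2) + phi x * x ^ 4)"
      by (rule ext) (simp add: algebra_simps)
    then show ?thesis using i2 i4 by simp
  qed
  have iR: "integrable lborel (\<lambda>x. phi x * (a + x\<^sup>2))"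
  proof -
    have "(\<lambda>x. phi x * (a + x\<^sup>2)) = (\<lambda>x. a * phi x + phi x * x ^ 2)"
      by (rule ext) (simp add: algebra_simps)
    then show ?thesis using i0 i2 by simp
  qed
  show ?thesis
    unfolding e2 e1 NN0
    apply (subst NNB[OF iL])
    using a apply simp
    apply (subst NNB[OF iR])
    using a apply simp
  proof -
    have "ennreal (a + 3) = ennreal (a + 1) + ennreal 2"
      by (subst ennreal_plus[symmetric]) (use a in auto)
    then show "ennreal (\<integral>x. phi x * (a * x\<^sup>2 + x ^ 4) \<partial>lborel) = ennreal (\<integral>x. phi x * (a + x\<^sup>2) \<partial>lborel) + 2 * 1"
      by (simp add: L R)
  qed
qed

abbreviation G1 :: "real measure" where "G1 \<equiv> density lborel (\<lambda>x. ennreal (phi x))"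

lemma gauss_eq: "gauss_space N = PiM {..<N} (\<lambda>_. G1)"
  by (simp add: gauss_space_def)

lemma G1_prob: "prob_space G1"
  by (rule prob_space_normal_density) simp

lemma gauss_prob: "prob_space (gauss_space N)"
  unfolding gauss_eq by (intro prob_space_PiM G1_prob)

lemma psf: "product_sigma_finite (\<lambda>_. G1)"
  unfolding product_sigma_finite_def
  using G1_prob prob_space_imp_sigma_finite by blast

lemma space_G1[simp]: "space G1 = UNIV" by simp

lemma chi_meas[measurable]: "chi_norm N \<in> borel_measurable (gauss_space N)"
  unfolding chi_norm_def[abs_def] gauss_eq by measurable

lemma comp_meas[measurable]: "i < N \<Longrightarrow> (\<lambda>w. w i) \<in> borel_measurable (gauss_space N)"
  unfolding gauss_eq by measurable

lemma lift:
  assumes i: "i < N"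
    and m1: "g \<in> borel_measurable (gauss_space N)" and m2: "h \<in> borel_measurable (gauss_space N)"
    and eq: "\<And>w. (\<integral>\<^sup>+y. g (w(i := y)) \<partial>G1) = (\<integral>\<^sup>+y. h (w(i := y)) \<partial>G1)"
  shows "(\<integral>\<^sup>+w. g w \<partial>gauss_space N) = (\<integral>\<^sup>+w. h w \<partial>gauss_space N)"
proof -
  interpret product_sigma_finite "\<lambda>_. G1" by (rule psf)
  define I where "I = {..<N} - {i}"
  have ins: "{..<N} = insert i I" using i unfolding I_def by auto
  have f: "finite I" "i \<notin> I" unfolding I_def by auto
  have m1': "g \<in> borel_measurable (PiM (insert i I) (\<lambda>_. G1))"
    using m1 unfolding gauss_eq ins .
  have m2': "h \<in> borel_measurable (PiM (insert i I) (\<lambda>_. G1))"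
    using m2 unfolding gauss_eq ins .
  show ?thesis
    unfolding gauss_eq ins
    apply (subst product_nn_integral_insert[OF f m1'])
    apply (subst product_nn_integral_insert[OF f m2'])
    using eq by simp
qed

lemma chi_upd:
  assumes "i < N"
  shows "chi_norm N (w(i := y)) = sqrt ((\<Sum>j\<in>{..<N} - {i}. (w j)\<^sup>2) + y\<^sup>2)"
proof -
  have ins: "{..<N} = insert i ({..<N} - {i})" using assms by auto
  have "(\<Sum>j<N. ((w(i := y)) j)\<^sup>2) = ((w(i := y)) i)\<^sup>2 + (\<Sum>j\<in>{..<N} - {i}. ((w(i := y)) j)\<^sup>2)"
    using assms by (intro sum.remove) auto
  also have "(\<Sum>j\<in>{..<N} - {i}. ((w(i := y)) j)\<^sup>2) = (\<Sum>j\<in>{..<N} - {i}. (w j)\<^sup>2)"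
    by (rule sum.cong) auto
  finally show ?thesis unfolding chi_norm_def by (simp add: add.commute)
qed

lemma inner_G1: "g \<in> borel_measurable borel \<Longrightarrow> (\<integral>\<^sup>+y. g y \<partial>G1) = (\<integral>\<^sup>+y. ennreal (phi y) * g y \<partial>lborel)"
  by (subst nn_integral_density) auto

abbreviation "rest N i w \<equiv> (\<Sum>j\<in>{..<N} - {i}. (w j)\<^sup>2)"

lemma rest_nonneg: "0 \<le> rest N i (w :: nat \<Rightarrow> real)" by (simp add: sum_nonneg)

lemma inner_split:
  assumes [measurable]: "f \<in> borel_measurable borel" "g \<in> borel_measurable borel"
  shows "(\<integral>\<^sup>+y. ennreal (f y) + ennreal (g y) \<partial>G1) =
    (\<integral>\<^sup>+y. ennreal (phi y) * ennreal (f y) \<partial>lborel) + (\<integral>\<^sup>+y. ennreal (phi y) * ennreal (g y) \<partial>lborel)"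
  by (subst inner_G1) (auto simp: distrib_left nn_integral_add)

lemma inner_split_c:
  assumes [measurable]: "f \<in> borel_measurable borel" "g \<in> borel_measurable borel"
  shows "(\<integral>\<^sup>+y. ennreal (f y) + c * ennreal (g y) \<partial>G1) =
    (\<integral>\<^sup>+y. ennreal (phi y) * ennreal (f y) \<partial>lborel) + c * (\<integral>\<^sup>+y. ennreal (phi y) * ennreal (g y) \<partial>lborel)"
proof -
  have "(\<integral>\<^sup>+y. ennreal (f y) + c * ennreal (g y) \<partial>G1) =
     (\<integral>\<^sup>+y. ennreal (phi y) * ennreal (f y) + c * (ennreal (phi y) * ennreal (g y)) \<partial>lborel)"
    by (subst inner_G1) (auto simp: distrib_left mult.left_commute)
  also have "\<dots> = (\<integral>\<^sup>+y. ennreal (phi y) * ennreal (f y) \<partial>lborel) + c * (\<integral>\<^sup>+y. ennreal (phi y) * ennreal (g y) \<partial>lborel)"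
    by (subst nn_integral_add) (auto simp: nn_integral_cmult)
  finally show ?thesis .
qed

lemma mt_xZk: "i < N \<Longrightarrow> (\<lambda>w. ennreal ((w i)\<^sup>2 * chi_norm N w ^ k)) \<in> borel_measurable (gauss_space N)"
  by measurable
lemma mt_xZ: "i < N \<Longrightarrow> (\<lambda>w. ennreal ((w i)\<^sup>2 * chi_norm N w)) \<in> borel_measurable (gauss_space N)"
  by measurable
lemma mt_x: "i < N \<Longrightarrow> (\<lambda>w. ennreal ((w i)\<^sup>2)) \<in> borel_measurable (gauss_space N)"
  by measurable
lemma mt_xdZ: "i < N \<Longrightarrow> (\<lambda>w. ennreal ((w i)\<^sup>2 / chi_norm N w)) \<in> borel_measurable (gauss_space N)"
  by measurable
lemma mt_xc: "i < N \<Longrightarrow> (\<lambda>w. c * ennreal ((w i)\<^sup>2)) \<in> borel_measurable (gauss_space N)"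
  by measurable
lemma mt_xZc: "i < N \<Longrightarrow> (\<lambda>w. c * ennreal ((w i)\<^sup>2 * chi_norm N w)) \<in> borel_measurable (gauss_space N)"
  by measurable
lemma mt_Zk: "(\<lambda>w. ennreal (chi_norm N w ^ k)) \<in> borel_measurable (gauss_space N)"
  by measurable
lemma mt_Z: "(\<lambda>w. ennreal (chi_norm N w)) \<in> borel_measurable (gauss_space N)"
  by measurable

lemma mom1:
  assumes i: "i < N"
  shows "(\<integral>\<^sup>+w. ennreal ((w i)\<^sup>2 * chi_norm N w) \<partial>gauss_space N) =
    (\<integral>\<^sup>+w. ennreal (chi_norm N w) \<partial>gauss_space N) + (\<integral>\<^sup>+w. ennreal ((w i)\<^sup>2 / chi_norm N w) \<partial>gauss_space N)"
proof -
  have "(\<integral>\<^sup>+w. ennreal ((w i)\<^sup>2 * chi_norm N w) \<partial>gauss_space N) =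
    (\<integral>\<^sup>+w. ennreal (chi_norm N w) + ennreal ((w i)\<^sup>2 / chi_norm N w) \<partial>gauss_space N)"
  proof (rule lift[OF i])
    fix w :: "nat \<Rightarrow> real"
    define a where "a = rest N i w"
    have a: "0 \<le> a" unfolding a_def by (rule rest_nonneg)
    have "(\<integral>\<^sup>+y. ennreal (((w(i := y)) i)\<^sup>2 * chi_norm N (w(i := y))) \<partial>G1) =
          (\<integral>\<^sup>+y. ennreal (y\<^sup>2 * sqrt (a + y\<^sup>2)) \<partial>G1)"
      using i by (simp add: chi_upd a_def)
    also have "\<dots> = (\<integral>\<^sup>+y. ennreal (phi y) * ennreal (y\<^sup>2 * sqrt (a + y\<^sup>2)) \<partial>lborel)"
      by (rule inner_G1) measurable
    also have "\<dots> = (\<integral>\<^sup>+y. ennreal (phi y) * ennreal (sqrt (a + y\<^sup>2)) \<partial>lborel) +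
         (\<integral>\<^sup>+y. ennreal (phi y) * ennreal (y\<^sup>2 / sqrt (a + y\<^sup>2)) \<partial>lborel)"
      by (rule NN1[OF a])
    also have "\<dots> = (\<integral>\<^sup>+y. ennreal (sqrt (a + y\<^sup>2)) + ennreal (y\<^sup>2 / sqrt (a + y\<^sup>2)) \<partial>G1)"
      by (rule inner_split[symmetric]) measurable
    also have "\<dots> = (\<integral>\<^sup>+y. ennreal (chi_norm N (w(i := y))) + ennreal (((w(i := y)) i)\<^sup>2 / chi_norm N (w(i := y))) \<partial>G1)"
      using i by (simp add: chi_upd a_def)
    finally show "(\<integral>\<^sup>+y. ennreal (((w(i := y)) i)\<^sup>2 * chi_norm N (w(i := y))) \<partial>G1) =
       (\<integral>\<^sup>+y. ennreal (chi_norm N (w(i := y))) + ennreal (((w(i := y)) i)\<^sup>2 / chi_norm N (w(i := y))) \<partial>G1)" .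
  qed (use mt_xZ[OF i] mt_Z mt_xdZ[OF i] in auto)
  also have "\<dots> = (\<integral>\<^sup>+w. ennreal (chi_norm N w) \<partial>gauss_space N) + (\<integral>\<^sup>+w. ennreal ((w i)\<^sup>2 / chi_norm N w) \<partial>gauss_space N)"
    by (intro nn_integral_add mt_Z mt_xdZ[OF i])
  finally show ?thesis .
qed

lemma mom0:
  assumes i: "i < N"
  shows "(\<integral>\<^sup>+w. ennreal ((w i)\<^sup>2) \<partial>gauss_space N) = 1"
proof -
  interpret P: prob_space "gauss_space N" by (rule gauss_prob)
  interpret Q: prob_space G1 by (rule G1_prob)
  have "(\<integral>\<^sup>+w. ennreal ((w i)\<^sup>2) \<partial>gauss_space N) = (\<integral>\<^sup>+w. 1 \<partial>gauss_space N)"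
  proof (rule lift[OF i])
    fix w :: "nat \<Rightarrow> real"
    have "(\<integral>\<^sup>+y. ennreal (((w(i := y)) i)\<^sup>2) \<partial>G1) = (\<integral>\<^sup>+y. ennreal (y\<^sup>2) \<partial>G1)" by simp
    also have "\<dots> = (\<integral>\<^sup>+y. ennreal (phi y) * ennreal (y\<^sup>2) \<partial>lborel)"
      by (rule inner_G1) measurable
    also have "\<dots> = 1" by (rule NN0)
    also have "\<dots> = (\<integral>\<^sup>+y. 1 \<partial>G1)" using Q.emeasure_space_1 by simp
    finally show "(\<integral>\<^sup>+y. ennreal (((w(i := y)) i)\<^sup>2) \<partial>G1) = (\<integral>\<^sup>+y. 1 \<partial>G1)" .
  qed (use mt_x[OF i] in auto)
  also have "\<dots> = 1" using P.emeasure_space_1 by simp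
  finally show ?thesis .
qed

lemma mom2:
  assumes i: "i < N"
  shows "(\<integral>\<^sup>+w. ennreal ((w i)\<^sup>2 * chi_norm N w ^ 2) \<partial>gauss_space N) =
    (\<integral>\<^sup>+w. ennreal (chi_norm N w ^ 2) \<partial>gauss_space N) + 2 * (\<integral>\<^sup>+w. ennreal ((w i)\<^sup>2) \<partial>gauss_space N)"
proof -
  have "(\<integral>\<^sup>+w. ennreal ((w i)\<^sup>2 * chi_norm N w ^ 2) \<partial>gauss_space N) =
    (\<integral>\<^sup>+w. ennreal (chi_norm N w ^ 2) + 2 * ennreal ((w i)\<^sup>2) \<partial>gauss_space N)"
  proof (rule lift[OF i])
    fix w :: "nat \<Rightarrow> real"
    define a where "a = rest N i w"
    have a: "0 \<le> a" unfolding a_def by (rule rest_nonneg)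
    have "(\<integral>\<^sup>+y. ennreal (((w(i := y)) i)\<^sup>2 * chi_norm N (w(i := y)) ^ 2) \<partial>G1) =
          (\<integral>\<^sup>+y. ennreal (y\<^sup>2 * sqrt (a + y\<^sup>2) ^ 2) \<partial>G1)"
      using i by (simp only: chi_upd a_def fun_upd_same)
    also have "\<dots> = (\<integral>\<^sup>+y. ennreal (phi y) * ennreal (y\<^sup>2 * sqrt (a + y\<^sup>2) ^ 2) \<partial>lborel)"
      by (rule inner_G1) measurable
    also have "\<dots> = (\<integral>\<^sup>+y. ennreal (phi y) * ennreal (sqrt (a + y\<^sup>2) ^ 2) \<partial>lborel) +
         2 * (\<integral>\<^sup>+y. ennreal (phi y) * ennreal (y\<^sup>2) \<partial>lborel)"
      by (rule NN2[OF a])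
    also have "\<dots> = (\<integral>\<^sup>+y. ennreal (sqrt (a + y\<^sup>2) ^ 2) + 2 * ennreal (y\<^sup>2) \<partial>G1)"
      by (rule inner_split_c[symmetric]) measurable
    also have "\<dots> = (\<integral>\<^sup>+y. ennreal (chi_norm N (w(i := y)) ^ 2) + 2 * ennreal (((w(i := y)) i)\<^sup>2) \<partial>G1)"
      using i by (simp only: chi_upd a_def fun_upd_same)
    finally show "(\<integral>\<^sup>+y. ennreal (((w(i := y)) i)\<^sup>2 * chi_norm N (w(i := y)) ^ 2) \<partial>G1) =
       (\<integral>\<^sup>+y. ennreal (chi_norm N (w(i := y)) ^ 2) + 2 * ennreal (((w(i := y)) i)\<^sup>2) \<partial>G1)" .
  qed (use mt_xZk[OF i] mt_Zk mt_x[OF i] in auto)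
  also have "\<dots> = (\<integral>\<^sup>+w. ennreal (chi_norm N w ^ 2) \<partial>gauss_space N) + 2 * (\<integral>\<^sup>+w. ennreal ((w i)\<^sup>2) \<partial>gauss_space N)"
    using nn_integral_cmult[OF mt_x[OF i], of 2] by (subst nn_integral_add) (auto intro!: mt_Zk mt_xc[OF i])
  finally show ?thesis .
qed

lemma mom3:
  assumes i: "i < N"
  shows "(\<integral>\<^sup>+w. ennreal ((w i)\<^sup>2 * chi_norm N w ^ 3) \<partial>gauss_space N) =
    (\<integral>\<^sup>+w. ennreal (chi_norm N w ^ 3) \<partial>gauss_space N) + 3 * (\<integral>\<^sup>+w. ennreal ((w i)\<^sup>2 * chi_norm N w) \<partial>gauss_space N)"
proof -
  have "(\<integral>\<^sup>+w. ennreal ((w i)\<^sup>2 * chi_norm N w ^ 3) \<partial>gauss_space N) =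
    (\<integral>\<^sup>+w. ennreal (chi_norm N w ^ 3) + 3 * ennreal ((w i)\<^sup>2 * chi_norm N w) \<partial>gauss_space N)"
  proof (rule lift[OF i])
    fix w :: "nat \<Rightarrow> real"
    define a where "a = rest N i w"
    have a: "0 \<le> a" unfolding a_def by (rule rest_nonneg)
    have "(\<integral>\<^sup>+y. ennreal (((w(i := y)) i)\<^sup>2 * chi_norm N (w(i := y)) ^ 3) \<partial>G1) =
          (\<integral>\<^sup>+y. ennreal (y\<^sup>2 * sqrt (a + y\<^sup>2) ^ 3) \<partial>G1)"
      using i by (simp only: chi_upd a_def fun_upd_same)
    also have "\<dots> = (\<integral>\<^sup>+y. ennreal (phi y) * ennreal (y\<^sup>2 * sqrt (a + y\<^sup>2) ^ 3) \<partial>lborel)"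
      by (rule inner_G1) measurable
    also have "\<dots> = (\<integral>\<^sup>+y. ennreal (phi y) * ennreal (sqrt (a + y\<^sup>2) ^ 3) \<partial>lborel) +
         3 * (\<integral>\<^sup>+y. ennreal (phi y) * ennreal (y\<^sup>2 * sqrt (a + y\<^sup>2)) \<partial>lborel)"
      by (rule NN3[OF a])
    also have "\<dots> = (\<integral>\<^sup>+y. ennreal (sqrt (a + y\<^sup>2) ^ 3) + 3 * ennreal (y\<^sup>2 * sqrt (a + y\<^sup>2)) \<partial>G1)"
      by (rule inner_split_c[symmetric]) measurable
    also have "\<dots> = (\<integral>\<^sup>+y. ennreal (chi_norm N (w(i := y)) ^ 3) + 3 * ennreal (((w(i := y)) i)\<^sup>2 * chi_norm N (w(i := y))) \<partial>G1)"
      using i by (simp only: chi_upd a_def fun_upd_same)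
    finally show "(\<integral>\<^sup>+y. ennreal (((w(i := y)) i)\<^sup>2 * chi_norm N (w(i := y)) ^ 3) \<partial>G1) =
       (\<integral>\<^sup>+y. ennreal (chi_norm N (w(i := y)) ^ 3) + 3 * ennreal (((w(i := y)) i)\<^sup>2 * chi_norm N (w(i := y))) \<partial>G1)" .
  qed (use mt_xZk[OF i] mt_Zk mt_xZ[OF i] in auto)
  also have "\<dots> = (\<integral>\<^sup>+w. ennreal (chi_norm N w ^ 3) \<partial>gauss_space N) + 3 * (\<integral>\<^sup>+w. ennreal ((w i)\<^sup>2 * chi_norm N w) \<partial>gauss_space N)"
    using nn_integral_cmult[OF mt_xZ[OF i], of 3] by (subst nn_integral_add) (auto intro!: mt_Zk mt_xZc[OF i])
  finally show ?thesis .
qed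

lemma Z_sq: "chi_norm N w ^ 2 = (\<Sum>i<N. (w i)\<^sup>2)"
  unfolding chi_norm_def by (metis real_sqrt_pow2 sum_nonneg zero_le_power2)

lemma Z_nonneg: "0 \<le> chi_norm N w"
  unfolding chi_norm_def by (metis real_sqrt_ge_zero sum_nonneg zero_le_power2)

lemma sum_mom:
  "(\<Sum>i<N. \<integral>\<^sup>+w. ennreal ((w i)\<^sup>2 * chi_norm N w ^ k) \<partial>gauss_space N) =
   (\<integral>\<^sup>+w. ennreal (chi_norm N w ^ (k + 2)) \<partial>gauss_space N)"
proof -
  have "(\<Sum>i<N. \<integral>\<^sup>+w. ennreal ((w i)\<^sup>2 * chi_norm N w ^ k) \<partial>gauss_space N) =
     (\<integral>\<^sup>+w. (\<Sum>i<N. ennreal ((w i)\<^sup>2 * chi_norm N w ^ k)) \<partial>gauss_space N)"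
    by (rule nn_integral_sum[symmetric]) (auto intro: mt_xZk)
  also have "\<dots> = (\<integral>\<^sup>+w. ennreal (chi_norm N w ^ (k + 2)) \<partial>gauss_space N)"
  proof (rule nn_integral_cong)
    fix w :: "nat \<Rightarrow> real"
    have "(\<Sum>i<N. ennreal ((w i)\<^sup>2 * chi_norm N w ^ k)) = ennreal (\<Sum>i<N. (w i)\<^sup>2 * chi_norm N w ^ k)"
      by (rule sum_ennreal) (simp add: Z_nonneg)
    also have "(\<Sum>i<N. (w i)\<^sup>2 * chi_norm N w ^ k) = chi_norm N w ^ 2 * chi_norm N w ^ k"
      by (simp add: Z_sq sum_distrib_right)
    also have "\<dots> = chi_norm N w ^ (k + 2)" by (metis power_add mult.commute)
    finally show "(\<Sum>i<N. ennreal ((w i)\<^sup>2 * chi_norm N w ^ k)) = ennreal (chi_norm N w ^ (k + 2))" .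
  qed
  finally show ?thesis .
qed

lemma sum_div:
  "(\<Sum>i<N. \<integral>\<^sup>+w. ennreal ((w i)\<^sup>2 / chi_norm N w) \<partial>gauss_space N) =
   (\<integral>\<^sup>+w. ennreal (chi_norm N w) \<partial>gauss_space N)"
proof -
  have "(\<Sum>i<N. \<integral>\<^sup>+w. ennreal ((w i)\<^sup>2 / chi_norm N w) \<partial>gauss_space N) =
     (\<integral>\<^sup>+w. (\<Sum>i<N. ennreal ((w i)\<^sup>2 / chi_norm N w)) \<partial>gauss_space N)"
    by (rule nn_integral_sum[symmetric]) (auto intro: mt_xdZ)
  also have "\<dots> = (\<integral>\<^sup>+w. ennreal (chi_norm N w) \<partial>gauss_space N)"
  proof (rule nn_integral_cong)
    fix w :: "nat \<Rightarrow> real"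
    have "(\<Sum>i<N. ennreal ((w i)\<^sup>2 / chi_norm N w)) = ennreal (\<Sum>i<N. (w i)\<^sup>2 / chi_norm N w)"
      by (rule sum_ennreal) (simp add: Z_nonneg)
    also have "(\<Sum>i<N. (w i)\<^sup>2 / chi_norm N w) = chi_norm N w ^ 2 / chi_norm N w"
      by (simp add: Z_sq sum_divide_distrib)
    also have "\<dots> = chi_norm N w" by (cases "chi_norm N w = 0") (simp_all add: power2_eq_square)
    finally show "(\<Sum>i<N. ennreal ((w i)\<^sup>2 / chi_norm N w)) = ennreal (chi_norm N w)" .
  qed
  finally show ?thesis .
qed

lemma nat_adds: "0 + 2 = (2::nat)" "1 + 2 = (3::nat)" "2 + 2 = (4::nat)" "3 + 2 = (5::nat)" by simp_all

lemma sm0: "(\<Sum>i<N. \<integral>\<^sup>+w. ennreal ((w i)\<^sup>2) \<partial>gauss_space N) = (\<integral>\<^sup>+w. ennreal (chi_norm N w ^ 2) \<partial>gauss_space N)"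
  using sum_mom[of N 0, unfolded nat_adds] by (simp only: power_0 mult_1_right)
lemmas sm1 = sum_mom[of N 1, unfolded nat_adds power_one_right] for N
lemmas sm2 = sum_mom[of N 2, unfolded nat_adds] for N
lemmas sm3 = sum_mom[of N 3, unfolded nat_adds] for N

lemma z_le: "0 \<le> (z::real) \<Longrightarrow> z \<le> 1 + z\<^sup>2"
proof -
  assume z: "0 \<le> z"
  have h: "0 \<le> (z - 1)\<^sup>2" by simp
  have "0 \<le> z * z" by simp
  then show ?thesis using h z by (simp add: power2_eq_square algebra_simps)
qed

abbreviation "mu N k \<equiv> (\<integral>\<^sup>+w. ennreal (chi_norm N w ^ k) \<partial>gauss_space N)"

lemma mu0: "mu N 0 = 1"
proof -
  interpret P: prob_space "gauss_space N" by (rule gauss_prob)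
  show ?thesis using P.emeasure_space_1 by simp
qed

lemma mu2: "mu N 2 = of_nat N"
proof -
  have "mu N 2 = (\<Sum>i<N. \<integral>\<^sup>+w. ennreal ((w i)\<^sup>2) \<partial>gauss_space N)"
    using sm0[of N] by simp
  also have "\<dots> = (\<Sum>i<N. 1)" by (intro sum.cong refl) (simp add: mom0)
  finally show ?thesis by simp
qed

lemma mu4: "mu N 4 = of_nat N * (of_nat N + 2)"
proof -
  have "mu N 4 = (\<Sum>i<N. \<integral>\<^sup>+w. ennreal ((w i)\<^sup>2 * chi_norm N w ^ 2) \<partial>gauss_space N)"
    using sm2[of N] by simp
  also have "\<dots> = (\<Sum>i<N. of_nat N + 2)"
    by (intro sum.cong refl) (simp add: mom2 mom0 mu2)
  finally show ?thesis by simp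
qed

lemma mu3: "mu N 3 = (of_nat N + 1) * mu N 1"
proof -
  have "mu N 3 = (\<Sum>i<N. \<integral>\<^sup>+w. ennreal ((w i)\<^sup>2 * chi_norm N w) \<partial>gauss_space N)"
    using sm1[of N] by simp
  also have "\<dots> = (\<Sum>i<N. mu N 1 + \<integral>\<^sup>+w. ennreal ((w i)\<^sup>2 / chi_norm N w) \<partial>gauss_space N)"
    by (intro sum.cong refl) (simp add: mom1)
  also have "\<dots> = of_nat N * mu N 1 + mu N 1"
    by (simp add: sum.distrib sum_div)
  finally show ?thesis by (simp add: distrib_right)
qed

lemma mu5: "mu N 5 = (of_nat N + 3) * mu N 3"
proof -
  have "mu N 5 = (\<Sum>i<N. \<integral>\<^sup>+w. ennreal ((w i)\<^sup>2 * chi_norm N w ^ 3) \<partial>gauss_space N)"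
    using sm3[of N] by simp
  also have "\<dots> = (\<Sum>i<N. mu N 3 + 3 * \<integral>\<^sup>+w. ennreal ((w i)\<^sup>2 * chi_norm N w) \<partial>gauss_space N)"
    by (intro sum.cong refl) (simp add: mom3)
  also have "\<dots> = of_nat N * mu N 3 + 3 * mu N 3"
    by (simp only: sum.distrib sum_distrib_left[symmetric] sm1 sum_constant card_lessThan)
  finally show ?thesis by (simp add: distrib_right)
qed

lemma mu1_fin: "mu N 1 \<le> 1 + of_nat N"
proof -
  have "mu N 1 \<le> (\<integral>\<^sup>+w. ennreal (chi_norm N w ^ 0) + ennreal (chi_norm N w ^ 2) \<partial>gauss_space N)"
  proof (rule nn_integral_mono)
    fix w :: "nat \<Rightarrow> real"
    have z: "0 \<le> chi_norm N w" by (rule Z_nonneg)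
    have "chi_norm N w \<le> 1 + chi_norm N w ^ 2" using z_le[OF z] .
    then have "ennreal (chi_norm N w) \<le> ennreal (1 + chi_norm N w ^ 2)" by (rule ennreal_leI)
    also have "\<dots> = ennreal 1 + ennreal (chi_norm N w ^ 2)" by (rule ennreal_plus) auto
    finally show "ennreal (chi_norm N w ^ 1) \<le> ennreal (chi_norm N w ^ 0) + ennreal (chi_norm N w ^ 2)"
      by simp
  qed
  also have "\<dots> = mu N 0 + mu N 2"
    by (rule nn_integral_add) (rule mt_Zk)+
  finally show ?thesis using prob_space.emeasure_space_1[OF gauss_prob[of N]] by (simp add: mu2)
qed

lemma real_of_nn:
  fixes f :: "'a \<Rightarrow> real"
  assumes "f \<in> borel_measurable M" "\<And>x. 0 \<le> f x" "(\<integral>\<^sup>+x. ennreal (f x) \<partial>M) = ennreal c" "0 \<le> c"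
  shows "integrable M f" "integral\<^sup>L M f = c"
proof -
  show i: "integrable M f"
    by (rule integrableI_nonneg) (use assms in auto)
  have "ennreal (integral\<^sup>L M f) = ennreal c"
    using nn_integral_eq_integral[OF i] assms by simp
  then show "integral\<^sup>L M f = c"
    using assms(4) integral_nonneg_AE[of f M] assms(2) by (simp add: ennreal_inj)
qed

definition "mZ N = enn2real (mu N 1)"

lemma mZ_nonneg: "0 \<le> mZ N" unfolding mZ_def by simp

lemma mu1_eq: "mu N 1 = ennreal (mZ N)"
proof -
  have "mu N 1 < \<infinity>" using mu1_fin[of N] by (simp add: le_less_trans ennreal_of_nat_eq_real_of_nat)
  then show ?thesis unfolding mZ_def by (simp add: ennreal_enn2real_if less_top)
qed

lemma en_nat: "of_nat N + (c::ennreal) = ennreal (real N + c')" if "c = ennreal c'" "0 \<le> c'"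
  using that by (simp add: ennreal_of_nat_eq_real_of_nat)

lemma mu_vals:
  "mu N 0 = ennreal 1"
  "mu N 1 = ennreal (mZ N)"
  "mu N 2 = ennreal (real N)"
  "mu N 3 = ennreal ((real N + 1) * mZ N)"
  "mu N 4 = ennreal (real N * (real N + 2))"
  "mu N 5 = ennreal ((real N + 3) * ((real N + 1) * mZ N))"
proof -
  show "mu N 0 = ennreal 1" using mu0[of N] by simp
  show m1: "mu N 1 = ennreal (mZ N)" by (rule mu1_eq)
  show "mu N 2 = ennreal (real N)" using mu2[of N] by (simp add: ennreal_of_nat_eq_real_of_nat)
  show m3: "mu N 3 = ennreal ((real N + 1) * mZ N)"
    using mu3[of N] m1 mZ_nonneg[of N]
    by (simp add: ennreal_of_nat_eq_real_of_nat ennreal_mult)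
  show "mu N 4 = ennreal (real N * (real N + 2))"
    using mu4[of N] by (simp add: ennreal_of_nat_eq_real_of_nat ennreal_mult)
  show "mu N 5 = ennreal ((real N + 3) * ((real N + 1) * mZ N))"
    using mu5[of N] m3 mZ_nonneg[of N]
    by (simp add: ennreal_of_nat_eq_real_of_nat ennreal_mult)
qed

definition cval :: "nat \<Rightarrow> nat \<Rightarrow> real" where "cval N k = (if k = 0 then 1 else if k = 1 then mZ N else if k = 2 then real N
  else if k = 3 then (real N + 1) * mZ N else if k = 4 then real N * (real N + 2)
  else (real N + 3) * ((real N + 1) * mZ N))"

lemma cval_nonneg: "0 \<le> cval N k"
  using mZ_nonneg[of N] unfolding cval_def by auto

lemma mu_c: "k \<le> 5 \<Longrightarrow> mu N k = ennreal (cval N k)"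
proof -
  assume "k \<le> 5"
  then have "k = 0 \<or> k = 1 \<or> k = 2 \<or> k = 3 \<or> k = 4 \<or> k = 5" by auto
  then show ?thesis
  proof (elim disjE)
  qed (simp_all only: cval_def mu_vals, simp_all)
qed

lemma Zk_int: "integrable (gauss_space N) (\<lambda>w. chi_norm N w ^ k)" if "k \<le> 5"
  by (rule real_of_nn(1)[OF _ _ mu_c[OF that] cval_nonneg]) (auto simp: Z_nonneg)

lemma Zk_c: "(\<integral>w. chi_norm N w ^ k \<partial>gauss_space N) = cval N k" if "k \<le> 5"
  by (rule real_of_nn(2)[OF _ _ mu_c[OF that] cval_nonneg]) (auto simp: Z_nonneg)

lemma Zk_val:
  "(\<integral>w. chi_norm N w ^ 0 \<partial>gauss_space N) = 1"
  "(\<integral>w. chi_norm N w ^ 1 \<partial>gauss_space N) = mZ N"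
  "(\<integral>w. chi_norm N w ^ 2 \<partial>gauss_space N) = real N"
  "(\<integral>w. chi_norm N w ^ 3 \<partial>gauss_space N) = (real N + 1) * mZ N"
  "(\<integral>w. chi_norm N w ^ 4 \<partial>gauss_space N) = real N * (real N + 2)"
  "(\<integral>w. chi_norm N w ^ 5 \<partial>gauss_space N) = (real N + 3) * ((real N + 1) * mZ N)"
  using Zk_c[of 0 N] Zk_c[of 1 N] Zk_c[of 2 N] Zk_c[of 3 N] Zk_c[of 4 N] Zk_c[of 5 N]
  by (simp_all add: cval_def del: power_one_right)

lemma hb_Zk: "k \<le> 5 \<Longrightarrow> has_bochner_integral (gauss_space N) (\<lambda>w. c * chi_norm N w ^ k) (c * cval N k)"
  using Zk_int[of k N] Zk_c[of k N] by (simp add: has_bochner_integral_iff)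

lemma poly_int:
  fixes a0 a1 a2 a3 a4 a5 :: real and N :: nat
  shows "integrable (gauss_space N) (\<lambda>w. a5 * chi_norm N w ^ 5 + a4 * chi_norm N w ^ 4 + a3 * chi_norm N w ^ 3
      + a2 * chi_norm N w ^ 2 + a1 * chi_norm N w ^ 1 + a0 * chi_norm N w ^ 0)"
    "(\<integral>w. a5 * chi_norm N w ^ 5 + a4 * chi_norm N w ^ 4 + a3 * chi_norm N w ^ 3
      + a2 * chi_norm N w ^ 2 + a1 * chi_norm N w ^ 1 + a0 * chi_norm N w ^ 0 \<partial>gauss_space N)
      = a5 * ((real N + 3) * ((real N + 1) * mZ N)) + a4 * (real N * (real N + 2))
      + a3 * ((real N + 1) * mZ N) + a2 * real N + a1 * mZ N + a0"
proof -
  have h: "has_bochner_integral (gauss_space N) (\<lambda>w. a5 * chi_norm N w ^ 5 + a4 * chi_norm N w ^ 4 + a3 * chi_norm N w ^ 3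
      + a2 * chi_norm N w ^ 2 + a1 * chi_norm N w ^ 1 + a0 * chi_norm N w ^ 0)
      (a5 * cval N 5 + a4 * cval N 4 + a3 * cval N 3 + a2 * cval N 2 + a1 * cval N 1 + a0 * cval N 0)"
    by (intro has_bochner_integral_add hb_Zk) simp_all
  then show "integrable (gauss_space N) (\<lambda>w. a5 * chi_norm N w ^ 5 + a4 * chi_norm N w ^ 4 + a3 * chi_norm N w ^ 3
      + a2 * chi_norm N w ^ 2 + a1 * chi_norm N w ^ 1 + a0 * chi_norm N w ^ 0)"
    unfolding has_bochner_integral_iff by blast
  show "(\<integral>w. a5 * chi_norm N w ^ 5 + a4 * chi_norm N w ^ 4 + a3 * chi_norm N w ^ 3
      + a2 * chi_norm N w ^ 2 + a1 * chi_norm N w ^ 1 + a0 * chi_norm N w ^ 0 \<partial>gauss_space N)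
      = a5 * ((real N + 3) * ((real N + 1) * mZ N)) + a4 * (real N * (real N + 2))
      + a3 * ((real N + 1) * mZ N) + a2 * real N + a1 * mZ N + a0"
    using has_bochner_integral_integral_eq[OF h] by (simp add: cval_def)
qed

lemma hankel:
  fixes b c :: real and N :: nat
  shows "0 \<le> (real N)\<^sup>2 * ((real N + 3) * ((real N + 1) * mZ N)) - 2 * real N * b * (real N * (real N + 2))
      + (b\<^sup>2 + 2 * real N * c) * ((real N + 1) * mZ N) - 2 * b * c * real N + c\<^sup>2 * mZ N"
proof -
  have eq: "(\<lambda>w. chi_norm N w * (real N * chi_norm N w ^ 2 - b * chi_norm N w + c)\<^sup>2) =
    (\<lambda>w. (real N)\<^sup>2 * chi_norm N w ^ 5 + (- 2 * real N * b) * chi_norm N w ^ 4 + (b\<^sup>2 + 2 * real N * c) * chi_norm N w ^ 3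
      + (- 2 * b * c) * chi_norm N w ^ 2 + c\<^sup>2 * chi_norm N w ^ 1 + 0 * chi_norm N w ^ 0)"
    by (rule ext) (simp add: eval_nat_numeral algebra_simps)
  have "0 \<le> (\<integral>w. chi_norm N w * (real N * chi_norm N w ^ 2 - b * chi_norm N w + c)\<^sup>2 \<partial>gauss_space N)"
    by (intro integral_nonneg_AE AE_I2 mult_nonneg_nonneg Z_nonneg) simp
  also have "\<dots> = (real N)\<^sup>2 * ((real N + 3) * ((real N + 1) * mZ N)) - 2 * real N * b * (real N * (real N + 2))
      + (b\<^sup>2 + 2 * real N * c) * ((real N + 1) * mZ N) - 2 * b * c * real N + c\<^sup>2 * mZ N"
    unfolding eq poly_int(2) by simp
  finally show ?thesis .
qed

lemma var_eq:
  "integrable (gauss_space N) (\<lambda>w. (chi_norm N w - mZ N)\<^sup>2)"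
  "(\<integral>w. (chi_norm N w - mZ N)\<^sup>2 \<partial>gauss_space N) = real N - (mZ N)\<^sup>2"
proof -
  have eq: "(\<lambda>w. (chi_norm N w - mZ N)\<^sup>2) =
    (\<lambda>w. 0 * chi_norm N w ^ 5 + 0 * chi_norm N w ^ 4 + 0 * chi_norm N w ^ 3
      + 1 * chi_norm N w ^ 2 + (- 2 * mZ N) * chi_norm N w ^ 1 + (mZ N)\<^sup>2 * chi_norm N w ^ 0)"
    by (rule ext) (simp add: eval_nat_numeral algebra_simps)
  show "integrable (gauss_space N) (\<lambda>w. (chi_norm N w - mZ N)\<^sup>2)"
    unfolding eq by (rule poly_int(1))
  show "(\<integral>w. (chi_norm N w - mZ N)\<^sup>2 \<partial>gauss_space N) = real N - (mZ N)\<^sup>2"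
    unfolding eq poly_int(2) by (simp add: power2_eq_square)
qed

lemma fourth_eq:
  "integrable (gauss_space N) (\<lambda>w. (chi_norm N w - mZ N) ^ 4)"
  "(\<integral>w. (chi_norm N w - mZ N) ^ 4 \<partial>gauss_space N) =
     (real N)\<^sup>2 + 2 * real N + (2 * real N - 4) * (mZ N)\<^sup>2 - 3 * ((mZ N)\<^sup>2)\<^sup>2"
proof -
  have eq: "(\<lambda>w. (chi_norm N w - mZ N) ^ 4) =
    (\<lambda>w. 0 * chi_norm N w ^ 5 + 1 * chi_norm N w ^ 4 + (- 4 * mZ N) * chi_norm N w ^ 3
      + (6 * (mZ N)\<^sup>2) * chi_norm N w ^ 2 + (- 4 * mZ N ^ 3) * chi_norm N w ^ 1 + (mZ N ^ 4) * chi_norm N w ^ 0)"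
    by (rule ext) (simp add: eval_nat_numeral algebra_simps)
  show "integrable (gauss_space N) (\<lambda>w. (chi_norm N w - mZ N) ^ 4)"
    unfolding eq by (rule poly_int(1))
  show "(\<integral>w. (chi_norm N w - mZ N) ^ 4 \<partial>gauss_space N) =
     (real N)\<^sup>2 + 2 * real N + (2 * real N - 4) * (mZ N)\<^sup>2 - 3 * ((mZ N)\<^sup>2)\<^sup>2"
    unfolding eq poly_int(2) by (simp add: eval_nat_numeral algebra_simps)
qed

lemma m_sq_le: "(mZ N)\<^sup>2 \<le> real N"
proof -
  have "0 \<le> (\<integral>w. (chi_norm N w - mZ N)\<^sup>2 \<partial>gauss_space N)"
    by (intro integral_nonneg_AE AE_I2) simp
  then show ?thesis using var_eq(2)[of N] by simp
qed

lemma m_sq_ge: "real N - 1/2 \<le> (mZ N)\<^sup>2"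
proof (cases "N = 0")
  case True
  have a: "0 \<le> (mZ N)\<^sup>2" by simp
  have b: "real N = 0" using True by simp
  show ?thesis using a b by linarith
next
  case False
  define n where "n = real N"
  define m where "m = mZ N"
  have n1: "1 \<le> n" using False unfolding n_def by simp
  have m0: "0 \<le> m" unfolding m_def by (rule mZ_nonneg)
  have mnz: "m \<noteq> 0"
  proof
    assume mz: "m = 0"
    have "0 \<le> n\<^sup>2 * ((n + 3) * ((n + 1) * m)) - 2 * n * 1 * (n * (n + 2))
      + (1\<^sup>2 + 2 * n * 0) * ((n + 1) * m) - 2 * 1 * 0 * n + 0\<^sup>2 * m"
      using hankel[of N 1 0] unfolding n_def m_def .
    then have "0 \<le> - 2 * n * (n * (n + 2))" using mz by simp
    moreover have "0 < n * (n * (n + 2))" using n1 by simp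
    ultimately show False by linarith
  qed
  then have mpos: "0 < m" using m0 by simp
  define Q where "Q = 4 * (n + 1)\<^sup>2 * m\<^sup>2 - (4 * n + 6) * n\<^sup>2"
  have "0 \<le> n\<^sup>2 * ((n + 3) * ((n + 1) * m)) - 2 * n * (2 * (n + 1) * m) * (n * (n + 2))
      + ((2 * (n + 1) * m)\<^sup>2 + 2 * n * (n * (n + 1))) * ((n + 1) * m) - 2 * (2 * (n + 1) * m) * (n * (n + 1)) * n
      + (n * (n + 1))\<^sup>2 * m"
    using hankel[of N "2 * (n + 1) * m" "n * (n + 1)"] unfolding n_def m_def .
  also have "\<dots> = ((n + 1) * m) * Q"
    unfolding Q_def by (simp add: power2_eq_square algebra_simps)
  finally have "0 \<le> ((n + 1) * m) * Q" .
  moreover have "0 < (n + 1) * m" using mpos n1 by simp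
  ultimately have Q0: "0 \<le> Q" by (simp add: zero_le_mult_iff)
  show ?thesis
  proof (rule ccontr)
    assume "\<not> ?thesis"
    then have lt: "m\<^sup>2 < n - 1/2" unfolding n_def m_def by simp
    have p: "0 < 4 * (n + 1)\<^sup>2" using n1 by simp
    have "4 * (n + 1)\<^sup>2 * m\<^sup>2 < 4 * (n + 1)\<^sup>2 * (n - 1/2)"
      using mult_strict_left_mono[OF lt p] .
    also have "\<dots> = (4 * n + 6) * n\<^sup>2 - 2" by (simp add: power2_eq_square algebra_simps)
    finally show False using Q0 unfolding Q_def by simp
  qed
qed

lemma var_le: "(\<integral>w. (chi_norm N w - mZ N)\<^sup>2 \<partial>gauss_space N) \<le> 1/2"
  using var_eq(2)[of N] m_sq_ge[of N] by simp

lemma fourth_le: "(\<integral>w. (chi_norm N w - mZ N) ^ 4 \<partial>gauss_space N) \<le> 5/4"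
proof -
  define n where "n = real N"
  define x where "x = (mZ N)\<^sup>2"
  have x0: "n - 1/2 \<le> x" unfolding n_def x_def by (rule m_sq_ge)
  have n0: "0 \<le> n" unfolding n_def by simp
  have "n\<^sup>2 + 2 * n + (2 * n - 4) * x - 3 * x\<^sup>2 - 5/4 = (x - (n - 1/2)) * (2 * n - 4 - 3 * (x + (n - 1/2)))"
    by (simp add: power2_eq_square algebra_simps)
  also have "\<dots> \<le> 0"
    by (rule mult_nonneg_nonpos) (use x0 n0 in auto)
  finally have "n\<^sup>2 + 2 * n + (2 * n - 4) * x - 3 * x\<^sup>2 \<le> 5/4" by simp
  then show ?thesis using fourth_eq(2)[of N] unfolding n_def x_def by simp
qed

lemma ent_term:
  fixes p n :: real
  assumes p: "0 \<le> p" and n: "0 < n"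
  shows "- (p * ln p) \<le> p * ln n + (1 / n - p)"
proof (cases "p = 0")
  case True then show ?thesis using n by simp
next
  case False
  then have pp: "0 < p" using p by simp
  have "ln (1 / (n * p)) \<le> 1 / (n * p) - 1"
    by (rule ln_le_minus_one) (use pp n in simp)
  then have "p * ln (1 / (n * p)) \<le> p * (1 / (n * p) - 1)"
    using pp by (simp add: mult_left_mono)
  also have "p * (1 / (n * p) - 1) = 1 / n - p" using pp n by (simp add: field_simps)
  also have "ln (1 / (n * p)) = - ln n - ln p" using pp n by (simp add: ln_div ln_mult)
  finally show ?thesis by (simp add: algebra_simps)
qed

lemma entropy_finite:
  fixes X :: "'a \<Rightarrow> real"
  assumes P: "prob_space M" and X[measurable]: "X \<in> borel_measurable M" and fin: "finite (X ` space M)"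
  shows "finite_disc_entropy M X" "disc_entropy M X \<le> ln (real (card (X ` space M)))"
proof -
  interpret prob_space M by (rule P)
  show "finite_disc_entropy M X" unfolding finite_disc_entropy_def using fin by simp
  define R where "R = X ` space M"
  define p where "p y = measure M {x \<in> space M. X x = y}" for y
  have ne: "R \<noteq> {}" unfolding R_def using not_empty by simp
  have finR: "finite R" using fin unfolding R_def .
  have cpos: "0 < real (card R)" using ne finR by (simp add: card_gt_0_iff)
  have sets: "{x \<in> space M. X x = y} \<in> sets M" for y by measurable
  have "(\<Sum>y\<in>R. p y) = measure M (\<Union>y\<in>R. {x \<in> space M. X x = y})"
    unfolding p_def
    by (rule finite_measure_finite_Union[symmetric]) (use finR sets in \<open>auto simp: disjoint_family_on_def\<close>)
  also have "(\<Union>y\<in>R. {x \<in> space M. X x = y}) = space M" unfolding R_def by auto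
  finally have sum1: "(\<Sum>y\<in>R. p y) = 1" by (simp add: prob_space)
  have "disc_entropy M X = (\<Sum>y\<in>R. - (p y * ln (p y)))"
    unfolding disc_entropy_def R_def p_def using fin by simp
  also have "\<dots> \<le> (\<Sum>y\<in>R. p y * ln (real (card R)) + (1 / real (card R) - p y))"
    by (intro sum_mono ent_term cpos) (simp add: p_def)
  also have "\<dots> = (\<Sum>y\<in>R. p y) * ln (real (card R)) + (real (card R) * (1 / real (card R)) - (\<Sum>y\<in>R. p y))"
    by (simp add: sum.distrib sum_subtractf sum_distrib_right)
  also have "\<dots> = ln (real (card R))" using sum1 cpos by simp
  finally show "disc_entropy M X \<le> ln (real (card (X ` space M)))" unfolding R_def .
qed

lemma sq_le_4: "0 < (a::real) \<Longrightarrow> a\<^sup>2 \<le> y\<^sup>2 \<Longrightarrow> y\<^sup>2 \<le> y ^ 4 / a\<^sup>2"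
proof -
  assume a: "0 < a" and h: "a\<^sup>2 \<le> y\<^sup>2"
  have "y\<^sup>2 * a\<^sup>2 \<le> y\<^sup>2 * y\<^sup>2" using h by (intro mult_left_mono) auto
  then show ?thesis using a by (simp add: le_divide_eq power2_eq_square eval_nat_numeral algebra_simps)
qed

lemma clamp_err:
  fixes u d :: real and K :: int
  assumes d: "0 < d" and K: "1 \<le> K"
  defines "c \<equiv> max (- real_of_int K) (min (real_of_int K) (real_of_int \<lfloor>u\<rfloor>))"
  shows "(d * u - d * c)\<^sup>2 \<le> d\<^sup>2 + (d * u) ^ 4 / (real_of_int K * d)\<^sup>2"
proof -
  have Kp: "0 < real_of_int K * d" using K d by simp
  have nn: "0 \<le> (d * u) ^ 4 / (real_of_int K * d)\<^sup>2" by (simp add: zero_le_even_power)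
  have fl: "real_of_int \<lfloor>u\<rfloor> \<le> u" "u < real_of_int \<lfloor>u\<rfloor> + 1" by linarith+
  consider (A) "- K \<le> \<lfloor>u\<rfloor> \<and> \<lfloor>u\<rfloor> \<le> K" | (B) "K < \<lfloor>u\<rfloor>" | (C) "\<lfloor>u\<rfloor> < - K" by linarith
  then show ?thesis
  proof cases
    case A
    then have "c = real_of_int \<lfloor>u\<rfloor>" unfolding c_def by auto
    then have e: "d * u - d * c = d * (u - real_of_int \<lfloor>u\<rfloor>)" by (simp add: algebra_simps)
    have "0 \<le> u - real_of_int \<lfloor>u\<rfloor>" "u - real_of_int \<lfloor>u\<rfloor> \<le> 1" using fl by linarith+
    then have "(u - real_of_int \<lfloor>u\<rfloor>)\<^sup>2 \<le> 1\<^sup>2" by (intro power_mono) auto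
    then have "(d * u - d * c)\<^sup>2 \<le> d\<^sup>2" unfolding e using d by (simp add: power_mult_distrib)
    then show ?thesis using nn by linarith
  next
    case B
    then have cK: "c = real_of_int K" using K unfolding c_def by auto
    have uK: "real_of_int K < u" using B fl by linarith
    have "0 \<le> d * u - d * c" "d * u - d * c \<le> d * u" using uK d K unfolding cK by auto
    then have "(d * u - d * c)\<^sup>2 \<le> (d * u)\<^sup>2" by (intro power_mono) auto
    also have "\<dots> \<le> (d * u) ^ 4 / (real_of_int K * d)\<^sup>2"
    proof (rule sq_le_4[OF Kp])
      have "real_of_int K * d \<le> d * u" using uK d by (simp add: mult.commute)
      then show "(real_of_int K * d)\<^sup>2 \<le> (d * u)\<^sup>2" using Kp by (intro power_mono) auto
    qed
    finally show ?thesis by (simp add: add_increasing)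
  next
    case C
    then have cK: "c = - real_of_int K" using K unfolding c_def by auto
    have uK: "u < - real_of_int K" using C fl by linarith
    have e1: "d * u - d * c = d * (u + real_of_int K)" unfolding cK by (simp add: algebra_simps)
    have "d * (u + real_of_int K) \<le> 0" using uK d by (intro mult_nonneg_nonpos) auto
    moreover have "0 \<le> d * real_of_int K" using d K by simp
    then have "d * u \<le> d * (u + real_of_int K)" by (simp add: algebra_simps)
    ultimately have "d * u - d * c \<le> 0" "d * u \<le> d * u - d * c" unfolding e1 by auto
    then have "(- (d * u - d * c))\<^sup>2 \<le> (- (d * u))\<^sup>2" by (intro power_mono) auto
    then have "(d * u - d * c)\<^sup>2 \<le> (d * u)\<^sup>2" by (simp only: power2_minus)
    also have "\<dots> \<le> (d * u) ^ 4 / (real_of_int K * d)\<^sup>2"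
    proof (rule sq_le_4[OF Kp])
      have "real_of_int K \<le> - u" using uK by linarith
      then have "d * real_of_int K \<le> d * (- u)" using d by (intro mult_left_mono) auto
      then have "real_of_int K * d \<le> - (d * u)" by (simp add: mult.commute)
      then have "(real_of_int K * d)\<^sup>2 \<le> (- (d * u))\<^sup>2" using Kp by (intro power_mono) auto
      then show "(real_of_int K * d)\<^sup>2 \<le> (d * u)\<^sup>2" by simp
    qed
    finally show ?thesis by (simp add: add_increasing)
  qed
qed

lemma ln_bound:
  fixes D :: real and K :: int
  assumes D: "0 < D" "D < 1/2" and K1: "real_of_int K \<le> 3 / D + 1" and c: "real c \<le> real_of_int (2 * K + 1)" and c0: "0 < c"
  shows "ln (real c) \<le> 5 * ln (1 / D)"
proof -
  have "real c \<le> 12 / D"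
  proof -
    have "real_of_int (2 * K + 1) \<le> 2 * (3 / D + 1) + 1" using K1 by simp
    also have "\<dots> \<le> 12 / D" using D by (simp add: field_simps)
    finally show ?thesis using c by linarith
  qed
  then have "ln (real c) \<le> ln (12 / D)" by (subst ln_le_cancel_iff) (use c0 D in auto)
  also have "ln (12 / D) = ln 12 + ln (1 / D)" using D by (simp add: ln_div)
  also have "ln 12 \<le> 4 * ln (1 / D)"
  proof -
    have "ln 12 \<le> ln ((2::real) ^ 4)" by simp
    also have "\<dots> = real 4 * ln 2" by (rule ln_realpow)
    also have "ln 2 \<le> ln (1 / D)" using D by (simp add: field_simps)
    finally show ?thesis by simp
  qed
  finally show ?thesis by simp
qed

declare comp_meas[measurable del]

theorem lemma15:
  "\<exists>C::real. C > 0 \<and>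
     (\<forall>(N::nat) (D::real). 0 < D \<and> D \<le> 1 \<longrightarrow>
        (\<exists>f :: real \<Rightarrow> real.
            f \<in> borel_measurable borel \<and>
            countable ((f \<circ> chi_norm N) ` space (gauss_space N)) \<and>
            integrable (gauss_space N) (\<lambda>\<omega>. (chi_norm N \<omega> - f (chi_norm N \<omega>))\<^sup>2) \<and>
            (\<integral>\<omega>. (chi_norm N \<omega> - f (chi_norm N \<omega>))\<^sup>2 \<partial>gauss_space N) \<le> D \<and>
            finite_disc_entropy (gauss_space N) (f \<circ> chi_norm N) \<and>
            disc_entropy (gauss_space N) (f \<circ> chi_norm N) \<le> C * ln (1 / D)))"
proof (intro exI[of _ 5] conjI allI impI)
  fix N :: nat and D :: real
  assume D: "0 < D \<and> D \<le> 1"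
  interpret P: prob_space "gauss_space N" by (rule gauss_prob)
  define m where "m = mZ N"
  show "\<exists>f :: real \<Rightarrow> real.
            f \<in> borel_measurable borel \<and>
            countable ((f \<circ> chi_norm N) ` space (gauss_space N)) \<and>
            integrable (gauss_space N) (\<lambda>\<omega>. (chi_norm N \<omega> - f (chi_norm N \<omega>))\<^sup>2) \<and>
            (\<integral>\<omega>. (chi_norm N \<omega> - f (chi_norm N \<omega>))\<^sup>2 \<partial>gauss_space N) \<le> D \<and>
            finite_disc_entropy (gauss_space N) (f \<circ> chi_norm N) \<and>
            disc_entropy (gauss_space N) (f \<circ> chi_norm N) \<le> 5 * ln (1 / D)"
  proof (cases "1/2 \<le> D")
    case True
    define f :: "real \<Rightarrow> real" where "f = (\<lambda>_. m)"
    have img: "(f \<circ> chi_norm N) ` space (gauss_space N) = {m}"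
      unfolding f_def using P.not_empty by auto
    have fm: "(f \<circ> chi_norm N) \<in> borel_measurable (gauss_space N)" unfolding f_def by simp
    have lnD: "0 \<le> ln (1 / D)" using D by simp
    show ?thesis
    proof (intro exI[of _ f] conjI)
      show "f \<in> borel_measurable borel" unfolding f_def by simp
      show "countable ((f \<circ> chi_norm N) ` space (gauss_space N))" unfolding img by simp
      show "integrable (gauss_space N) (\<lambda>\<omega>. (chi_norm N \<omega> - f (chi_norm N \<omega>))\<^sup>2)"
        unfolding f_def m_def by (rule var_eq(1))
      show "(\<integral>\<omega>. (chi_norm N \<omega> - f (chi_norm N \<omega>))\<^sup>2 \<partial>gauss_space N) \<le> D"
        unfolding f_def m_def using var_le[of N] True by linarith
      show "finite_disc_entropy (gauss_space N) (f \<circ> chi_norm N)"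
        by (rule entropy_finite(1)[OF gauss_prob fm]) (simp only: img, simp)
      have "disc_entropy (gauss_space N) (f \<circ> chi_norm N) \<le> ln (real (card ((f \<circ> chi_norm N) ` space (gauss_space N))))"
        by (rule entropy_finite(2)[OF gauss_prob fm]) (simp only: img, simp)
      also have "\<dots> = 0" unfolding img by simp
      also have "0 \<le> 5 * ln (1 / D)" using lnD by simp
      finally show "disc_entropy (gauss_space N) (f \<circ> chi_norm N) \<le> 5 * ln (1 / D)" .
    qed
  next
    case False
    then have Dh: "D < 1/2" by simp
    define d where "d = sqrt (D / 2)"
    define K :: int where "K = \<lceil>3 / D\<rceil>"
    have dpos: "0 < d" unfolding d_def using D by simp
    have d2: "d\<^sup>2 = D / 2" unfolding d_def using D by simp
    have KD: "3 / D \<le> real_of_int K" unfolding K_def by simp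
    have KD1: "real_of_int K \<le> 3 / D + 1" unfolding K_def by linarith
    have K1: "1 \<le> K"
    proof -
      have "1 \<le> 3 / D" using D by (simp add: field_simps)
      then show ?thesis using KD by linarith
    qed
    define f :: "real \<Rightarrow> real" where
      "f = (\<lambda>z. m + d * max (- real_of_int K) (min (real_of_int K) (real_of_int \<lfloor>(z - m) / d\<rfloor>)))"
    have fmeas: "f \<in> borel_measurable borel" unfolding f_def by measurable
    have fm: "(f \<circ> chi_norm N) \<in> borel_measurable (gauss_space N)" using fmeas by measurable
    have rng: "f z \<in> (\<lambda>j. m + d * real_of_int j) ` {-K..K}" for z
    proof -
      define j where "j = max (- K) (min K \<lfloor>(z - m) / d\<rfloor>)"
      have "f z = m + d * real_of_int j" unfolding f_def j_def by (simp add: max_def min_def)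
      moreover have "j \<in> {-K..K}" unfolding j_def using K1 by auto
      ultimately show ?thesis by blast
    qed
    have sub: "(f \<circ> chi_norm N) ` space (gauss_space N) \<subseteq> (\<lambda>j. m + d * real_of_int j) ` {-K..K}"
      using rng by auto
    have fin: "finite ((f \<circ> chi_norm N) ` space (gauss_space N))"
      by (rule finite_subset[OF sub]) simp
    have card: "card ((f \<circ> chi_norm N) ` space (gauss_space N)) \<le> nat (2 * K + 1)"
    proof -
      have "card ((f \<circ> chi_norm N) ` space (gauss_space N)) \<le> card ((\<lambda>j. m + d * real_of_int j) ` {-K..K})"
        by (rule card_mono[OF _ sub]) simp
      also have "\<dots> \<le> card {-K..K}" by (rule card_image_le) simp
      also have "\<dots> = nat (2 * K + 1)" by simp
      finally show ?thesis .
    qed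
    have err: "(z - f z)\<^sup>2 \<le> d\<^sup>2 + (z - m) ^ 4 / (real_of_int K * d)\<^sup>2" for z
    proof -
      define u where "u = (z - m) / d"
      have du: "d * u = z - m" unfolding u_def using dpos by simp
      have e: "z - f z = d * u - d * max (- real_of_int K) (min (real_of_int K) (real_of_int \<lfloor>u\<rfloor>))"
        unfolding f_def u_def[symmetric] using du by simp
      have "(d * u - d * max (- real_of_int K) (min (real_of_int K) (real_of_int \<lfloor>u\<rfloor>)))\<^sup>2
          \<le> d\<^sup>2 + (d * u) ^ 4 / (real_of_int K * d)\<^sup>2" by (rule clamp_err[OF dpos K1])
      then show ?thesis unfolding e du .
    qed
    define g where "g = (\<lambda>w. d\<^sup>2 + (chi_norm N w - m) ^ 4 / (real_of_int K * d)\<^sup>2)"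
    have gi: "integrable (gauss_space N) g"
      unfolding g_def m_def using fourth_eq(1)[of N] by simp
    have gint: "(\<integral>w. g w \<partial>gauss_space N) \<le> D"
    proof -
      have "(\<integral>w. g w \<partial>gauss_space N) = d\<^sup>2 + (\<integral>w. (chi_norm N w - m) ^ 4 \<partial>gauss_space N) / (real_of_int K * d)\<^sup>2"
        unfolding g_def m_def using fourth_eq(1)[of N] P.prob_space by simp
      also have "\<dots> \<le> d\<^sup>2 + (5/4) / (real_of_int K * d)\<^sup>2"
      proof -
        have "(\<integral>w. (chi_norm N w - m) ^ 4 \<partial>gauss_space N) \<le> 5/4" using fourth_le[of N] unfolding m_def .
        then have "(\<integral>w. (chi_norm N w - m) ^ 4 \<partial>gauss_space N) / (real_of_int K * d)\<^sup>2 \<le> (5/4) / (real_of_int K * d)\<^sup>2"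
          by (rule divide_right_mono) simp
        then show ?thesis by simp
      qed
      also have "(5/4) / (real_of_int K * d)\<^sup>2 \<le> D / 2"
      proof -
        have "3 \<le> real_of_int K * D" using KD D by (simp add: field_simps)
        then have "3\<^sup>2 \<le> (real_of_int K * D)\<^sup>2" by (intro power_mono) auto
        then have "5 \<le> (real_of_int K * D)\<^sup>2" by simp
        moreover have "(real_of_int K * d)\<^sup>2 = (real_of_int K)\<^sup>2 * (D / 2)"
          by (simp add: power_mult_distrib d2)
        moreover have "0 < real_of_int K" using K1 by simp
        ultimately have f5: "5 \<le> (real_of_int K * D)\<^sup>2" and eqA: "(real_of_int K * d)\<^sup>2 = (real_of_int K)\<^sup>2 * (D / 2)"
          and Kp: "0 < real_of_int K" by auto
        have Apos: "0 < (real_of_int K * d)\<^sup>2" using Kp dpos by simp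
        have "(D / 2) * (real_of_int K * d)\<^sup>2 = (real_of_int K * D)\<^sup>2 / 4"
          unfolding eqA by (simp add: power_mult_distrib power2_eq_square)
        then have "5/4 \<le> (D / 2) * (real_of_int K * d)\<^sup>2" using f5 by simp
        then show ?thesis using Apos by (simp add: divide_le_eq)
      qed
      finally show ?thesis using d2 by simp
    qed
    have bound: "AE w in gauss_space N. norm ((chi_norm N w - f (chi_norm N w))\<^sup>2) \<le> norm (g w)"
    proof (rule AE_I2)
      fix w
      have "0 \<le> g w" unfolding g_def by (simp add: zero_le_even_power)
      then show "norm ((chi_norm N w - f (chi_norm N w))\<^sup>2) \<le> norm (g w)"
        using err[of "chi_norm N w"] unfolding g_def by simp
    qed
    have ii: "integrable (gauss_space N) (\<lambda>\<omega>. (chi_norm N \<omega> - f (chi_norm N \<omega>))\<^sup>2)"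
      by (rule Bochner_Integration.integrable_bound[OF gi _ bound]) (use fmeas in measurable)
    show ?thesis
    proof (intro exI[of _ f] conjI)
      show "f \<in> borel_measurable borel" by (rule fmeas)
      show "countable ((f \<circ> chi_norm N) ` space (gauss_space N))" using fin by (rule countable_finite)
      show "integrable (gauss_space N) (\<lambda>\<omega>. (chi_norm N \<omega> - f (chi_norm N \<omega>))\<^sup>2)" by (rule ii)
      have "(\<integral>\<omega>. (chi_norm N \<omega> - f (chi_norm N \<omega>))\<^sup>2 \<partial>gauss_space N) \<le> (\<integral>w. g w \<partial>gauss_space N)"
        by (rule integral_mono[OF ii gi]) (use err in \<open>simp add: g_def\<close>)
      then show "(\<integral>\<omega>. (chi_norm N \<omega> - f (chi_norm N \<omega>))\<^sup>2 \<partial>gauss_space N) \<le> D"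
        using gint by linarith
      show "finite_disc_entropy (gauss_space N) (f \<circ> chi_norm N)"
        by (rule entropy_finite(1)[OF gauss_prob fm fin])
      have ne: "0 < card ((f \<circ> chi_norm N) ` space (gauss_space N))"
        using fin P.not_empty by (simp add: card_gt_0_iff)
      have "disc_entropy (gauss_space N) (f \<circ> chi_norm N) \<le> ln (real (card ((f \<circ> chi_norm N) ` space (gauss_space N))))"
        by (rule entropy_finite(2)[OF gauss_prob fm fin])
      also have "\<dots> \<le> 5 * ln (1 / D)"
      proof (rule ln_bound[OF _ Dh KD1 _ ne])
        show "0 < D" using D by simp
        show "real (card ((f \<circ> chi_norm N) ` space (gauss_space N))) \<le> real_of_int (2 * K + 1)"
          using card K1 by linarith
      qed
      finally show "disc_entropy (gauss_space N) (f \<circ> chi_norm N) \<le> 5 * ln (1 / D)" .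
    qed
  qed
qed simp

end
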